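(* Let $(X_j)_{j\in\mathbb{Z}^2}$ be i.i.d. Poisson random variables with mean $\lambda>0$, and let $N_n$ be the greedy lattice animal weight of size $n$. There is a constant $\rho>0$ (not depending on $\lambda$) such that for all $y\ge y_0:=(e^3\lambda)\vee\rho$ and all $n\in\mathbb{N}$, $$\mathbb{P}(N_n>yn)\le e^{-yn}.$$
   Context: A lattice animal is a connected subset of $\mathbb{Z}^2$ (nearest-neighbor connectivity) containing the origin; $A(n)$ is the set of lattice animals with $n$ sites. Given $X:\mathbb{Z}^2\to\mathbb{R}$, the weight of $\mathcal{A}\in A(n)$ is $\sum_{k\in\mathcal{A}}X_k$, and $N_n=\max_{\mathcal{A}\in A(n)}\sum_{k\in\mathcal{A}}X_k$. *)

theory Defs
  imports "HOL-Probability.Probability"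
begin

definition lattice_adj :: "int \<times> int \<Rightarrow> int \<times> int \<Rightarrow> bool" where
  "lattice_adj p q \<longleftrightarrow> \<bar>fst p - fst q\<bar> + \<bar>snd p - snd q\<bar> = 1"

definition lattice_connected :: "(int \<times> int) set \<Rightarrow> bool" where
  "lattice_connected A \<longleftrightarrow>
     (\<forall>p\<in>A. \<forall>q\<in>A. (p, q) \<in> {(u, v). u \<in> A \<and> v \<in> A \<and> lattice_adj u v}\<^sup>*)"

definition lattice_animals :: "nat \<Rightarrow> (int \<times> int) set set" where
  "lattice_animals n = {A. finite A \<and> card A = n \<and> (0, 0) \<in> A \<and> lattice_connected A}"

definition greedy_animal :: "((int \<times> int) \<Rightarrow> real) \<Rightarrow> nat \<Rightarrow> real" where
  "greedy_animal X n = Max ((\<lambda>A. \<Sum>k\<in>A. X k) ` lattice_animals n)"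

end

theory Submission imports Defs begin

definition mv :: "int \<times> int \<Rightarrow> nat \<Rightarrow> int \<times> int" where
  "mv p d = (if d = 0 then (fst p + 1, snd p) else if d = 1 then (fst p - 1, snd p)
             else if d = 2 then (fst p, snd p + 1) else (fst p, snd p - 1))"

definition opp :: "nat \<Rightarrow> nat" where
  "opp d = (if d = 0 then 1 else if d = 1 then 0 else if d = 2 then 3 else 2)"

fun endp :: "int \<times> int \<Rightarrow> nat list \<Rightarrow> int \<times> int" where
  "endp p [] = p" | "endp p (d#ds) = endp (mv p d) ds"

fun vis :: "int \<times> int \<Rightarrow> nat list \<Rightarrow> (int \<times> int) set" where
  "vis p [] = {p}" | "vis p (d#ds) = insert p (vis (mv p d) ds)"

lemma mv_opp: "d < 4 \<Longrightarrow> mv (mv p d) (opp d) = p"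
  by (auto simp: mv_def opp_def)

lemma opp_lt: "d < 4 \<Longrightarrow> opp d < 4" by (auto simp: opp_def)

lemma adj_mv: "lattice_adj u v \<Longrightarrow> \<exists>d<4. v = mv u d"
proof -
  assume a: "lattice_adj u v"
  obtain a1 b1 a2 b2 where u: "u = (a1,b1)" and v: "v = (a2,b2)" by (cases u, cases v)
  from a have "\<bar>a1 - a2\<bar> + \<bar>b1 - b2\<bar> = 1" by (simp add: lattice_adj_def u v)
  hence "(a2 = a1 + 1 \<and> b2 = b1) \<or> (a2 = a1 - 1 \<and> b2 = b1) \<or> (a2 = a1 \<and> b2 = b1 + 1) \<or> (a2 = a1 \<and> b2 = b1 - 1)"
    by arith
  thus ?thesis
    apply (elim disjE)
    apply (rule exI[of _ 0]; simp add: mv_def u v)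
    apply (rule exI[of _ 1]; simp add: mv_def u v)
    apply (rule exI[of _ 2]; simp add: mv_def u v)
    apply (rule exI[of _ 3]; simp add: mv_def u v)
    done
qed

lemma start_in_vis: "p \<in> vis p xs"
  by (induction xs arbitrary: p) auto

lemma vis_append: "vis p (xs @ ys) = vis p xs \<union> vis (endp p xs) ys"
  by (induction xs arbitrary: p) (auto simp: start_in_vis)

lemma endp_in_vis: "endp p xs \<in> vis p xs"
  by (induction xs arbitrary: p) auto


lemma vis_split: "u \<in> vis p ds \<Longrightarrow> \<exists>xs ys. ds = xs @ ys \<and> endp p xs = u"
proof (induction ds arbitrary: p)
  case Nil thus ?case by auto
next
  case (Cons d ds)
  show ?case
  proof (cases "u = p")
    case True thus ?thesis by (intro exI[of _ "[]"] exI[of _ "d#ds"]) simp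
  next
    case False
    with Cons.prems have "u \<in> vis (mv p d) ds" by auto
    from Cons.IH[OF this] obtain xs ys where "ds = xs @ ys" "endp (mv p d) xs = u" by blast
    thus ?thesis by (intro exI[of _ "d#xs"] exI[of _ ys]) auto
  qed
qed

lemma vis_extend:
  assumes "u \<in> vis p ds" "lattice_adj u v"
  shows "\<exists>ds'. vis p ds' = insert v (vis p ds) \<and> length ds' = length ds + 2 \<and> set ds' \<subseteq> set ds \<union> {..<4}"
proof -
  obtain xs ys where ds: "ds = xs @ ys" and e: "endp p xs = u" using vis_split[OF assms(1)] by blast
  obtain d where d: "d < 4" "v = mv u d" using adj_mv[OF assms(2)] by blast
  let ?ds = "xs @ [d, opp d] @ ys"
  have "vis p ?ds = vis p xs \<union> vis u ([d, opp d] @ ys)" by (simp add: vis_append e)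
  also have "vis u ([d, opp d] @ ys) = insert u (insert v (vis u ys))"
    using d by (simp add: mv_opp)
  also have "vis p xs \<union> insert u (insert v (vis u ys)) = insert v (vis p ds)"
    using e start_in_vis[of u ys] by (auto simp: ds vis_append)
  finally show ?thesis using d opp_lt[of d] by (intro exI[of _ ?ds]) (auto simp: ds)
qed

lemma exit_edge:
  assumes "(p, w) \<in> {(u, v). u \<in> A \<and> v \<in> A \<and> lattice_adj u v}\<^sup>*" "p \<in> B" "w \<notin> B"
  shows "\<exists>u\<in>B. \<exists>v\<in>A - B. lattice_adj u v \<and> u \<in> A"
  using assms
proof (induction rule: rtrancl_induct)
  case base thus ?case by simp
next
  case (step x w)
  show ?case
  proof (cases "x \<in> B")
    case True with step show ?thesis by auto
  next
    case False with step show ?thesis by auto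
  qed
qed

lemma grow:
  assumes A: "finite A" "lattice_connected A" "p \<in> A"
  shows "k \<ge> 1 \<Longrightarrow> k \<le> card A \<Longrightarrow> \<exists>ds. length ds = 2 * (k - 1) \<and> set ds \<subseteq> {..<4}
            \<and> vis p ds \<subseteq> A \<and> card (vis p ds) = k"
proof (induction k rule: dec_induct[where i=1, case_names base step, consumes 1])
  case base thus ?case using A by (intro exI[of _ "[]"]) auto
next
  case (step k)
  then obtain ds where ds: "length ds = 2 * (k - 1)" "set ds \<subseteq> {..<4}" "vis p ds \<subseteq> A" "card (vis p ds) = k"
    by auto
  have fin: "finite (vis p ds)" using ds(3) A(1) finite_subset by blast
  have "vis p ds \<noteq> A" using ds(4) step by auto
  then obtain w where w: "w \<in> A" "w \<notin> vis p ds" using ds(3) by blast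
  have "(p, w) \<in> {(u, v). u \<in> A \<and> v \<in> A \<and> lattice_adj u v}\<^sup>*"
    using A w unfolding lattice_connected_def by blast
  from exit_edge[OF this start_in_vis w(2)] obtain u v where
    uv: "u \<in> vis p ds" "v \<in> A" "v \<notin> vis p ds" "lattice_adj u v" by blast
  from vis_extend[OF uv(1) uv(4)] obtain ds' where
    ds': "vis p ds' = insert v (vis p ds)" "length ds' = length ds + 2" "set ds' \<subseteq> set ds \<union> {..<4}" by blast
  show ?case using ds ds' uv fin step(1)
    by (intro exI[of _ ds']) auto
qed

lemma animals_sub:
  assumes "n \<ge> 1"
  shows "lattice_animals n \<subseteq> (\<lambda>ds. vis (0,0) ds) ` {ds. set ds \<subseteq> {..<4} \<and> length ds = 2 * (n - 1)}"
proof
  fix A assume "A \<in> lattice_animals n"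
  hence A: "finite A" "card A = n" "(0,0) \<in> A" "lattice_connected A" by (auto simp: lattice_animals_def)
  from grow[OF A(1) A(4) A(3), of n] assms A(2) obtain ds where
    ds: "length ds = 2 * (n - 1)" "set ds \<subseteq> {..<4}" "vis (0,0) ds \<subseteq> A" "card (vis (0,0) ds) = n" by auto
  have "vis (0,0) ds = A" using ds(3,4) A(1,2) by (simp add: card_subset_eq)
  thus "A \<in> (\<lambda>ds. vis (0,0) ds) ` {ds. set ds \<subseteq> {..<4} \<and> length ds = 2 * (n - 1)}"
    using ds by blast
qed

lemma animals_finite_card:
  assumes "n \<ge> 1"
  shows "finite (lattice_animals n) \<and> card (lattice_animals n) \<le> 16 ^ n"
proof -
  let ?L = "{ds. set ds \<subseteq> {..<4::nat} \<and> length ds = 2 * (n - 1)}"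
  have fL: "finite ?L" by (rule finite_lists_length_eq) simp
  have cL: "card ?L = 4 ^ (2 * (n - 1))" by (subst card_lists_length_eq) auto
  have "card (lattice_animals n) \<le> card ((\<lambda>ds. vis (0,0) ds) ` ?L)"
    using animals_sub[OF assms] fL by (intro card_mono) auto
  also have "\<dots> \<le> card ?L" by (rule card_image_le[OF fL])
  also have "\<dots> = (4^2) ^ (n - 1)" by (simp only: cL power_mult)
  also have "\<dots> = 16 ^ (n - 1)" by simp
  also have "\<dots> \<le> 16 ^ n" by (intro power_increasing) auto
  finally show ?thesis using animals_sub[OF assms] fL finite_subset by blast
qed

lemma line_conn:
  "j < n \<Longrightarrow> ((0,0), (int j, 0)) \<in> {(u, v). u \<in> {(int i, 0) |i. i < n} \<and> v \<in> {(int i, 0) |i. i < n} \<and> lattice_adj u v}\<^sup>*"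
proof (induction j)
  case 0 thus ?case by simp
next
  case (Suc j)
  hence "((0,0), (int j, 0)) \<in> {(u, v). u \<in> {(int i, 0) |i. i < n} \<and> v \<in> {(int i, 0) |i. i < n} \<and> lattice_adj u v}\<^sup>*" by simp
  moreover have "((int j, 0), (int (Suc j), 0)) \<in> {(u, v). u \<in> {(int i, 0) |i. i < n} \<and> v \<in> {(int i, 0) |i. i < n} \<and> lattice_adj u v}"
  proof -
    have "(int j, 0) \<in> {(int i, 0::int) |i. i < n}" using Suc.prems by auto
    moreover have "(int (Suc j), 0) \<in> {(int i, 0::int) |i. i < n}" using Suc.prems by blast
    ultimately show ?thesis by (auto simp: lattice_adj_def)
  qed
  ultimately show ?case by (rule rtrancl_into_rtrancl)
qed

lemma animals_nonempty:
  assumes "n \<ge> 1" shows "lattice_animals n \<noteq> {}"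
proof -
  let ?A = "{(int i, 0::int) |i. i < n}"
  have e: "?A = (\<lambda>i. (int i, 0)) ` {..<n}" by auto
  have c: "card ?A = n" unfolding e by (subst card_image) (auto simp: inj_on_def)
  have "lattice_connected ?A"
    unfolding lattice_connected_def
  proof (intro ballI)
    fix p q assume "p \<in> ?A" "q \<in> ?A"
    then obtain i j where ij: "p = (int i, 0)" "q = (int j, 0)" "i < n" "j < n" by auto
    have "(p, (0,0)) \<in> {(u, v). u \<in> ?A \<and> v \<in> ?A \<and> lattice_adj u v}\<^sup>*"
    proof -
      have "((0,0), p) \<in> {(u, v). u \<in> ?A \<and> v \<in> ?A \<and> lattice_adj u v}\<^sup>*"
        using line_conn[OF ij(3)] ij(1) by simp
      hence "(p, (0,0)) \<in> ({(u, v). u \<in> ?A \<and> v \<in> ?A \<and> lattice_adj u v}\<^sup>*)\<inverse>" by simp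
      also have "({(u, v). u \<in> ?A \<and> v \<in> ?A \<and> lattice_adj u v}\<^sup>*)\<inverse> = ({(u, v). u \<in> ?A \<and> v \<in> ?A \<and> lattice_adj u v}\<inverse>)\<^sup>*"
        by (simp add: rtrancl_converse)
      also have "{(u, v). u \<in> ?A \<and> v \<in> ?A \<and> lattice_adj u v}\<inverse> = {(u, v). u \<in> ?A \<and> v \<in> ?A \<and> lattice_adj u v}"
        by (auto simp: lattice_adj_def abs_minus_commute)
      finally show ?thesis .
    qed
    moreover have "((0,0), q) \<in> {(u, v). u \<in> ?A \<and> v \<in> ?A \<and> lattice_adj u v}\<^sup>*"
      using line_conn[OF ij(4)] ij(2) by simp
    ultimately show "(p, q) \<in> {(u, v). u \<in> ?A \<and> v \<in> ?A \<and> lattice_adj u v}\<^sup>*" by (rule rtrancl_trans)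
  qed
  moreover have "(0,0) \<in> ?A" using assms by force
  ultimately have "?A \<in> lattice_animals n" using c e by (simp add: lattice_animals_def)
  thus ?thesis by blast
qed


lemma poisson_mgf3:
  assumes lam: "lam > 0"
  shows "(\<integral>\<^sup>+x. ennreal (exp (3 * real x)) \<partial>measure_pmf (poisson_pmf lam)) = ennreal (exp (lam * (exp 3 - 1)))"
proof -
  have t: "lam ^ x / fact x * exp (- lam) * exp (3 * real x) = exp (-lam) * ((lam * exp 3) ^ x / fact x)" for x :: nat
  proof -
    have "exp (3 * real x) = exp 3 ^ x" by (metis exp_of_nat_mult mult.commute)
    thus ?thesis by (simp add: power_mult_distrib field_simps)
  qed
  have sm: "(\<lambda>x::nat. exp (-lam) * ((lam * exp 3) ^ x / fact x)) sums (exp (-lam) * exp (lam * exp 3))"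
    using exp_converges[of "lam * exp 3"] by (intro sums_mult) (simp add: divide_inverse mult.commute)
  have "(\<integral>\<^sup>+x. ennreal (exp (3 * real x)) \<partial>measure_pmf (poisson_pmf lam))
      = (\<integral>\<^sup>+x. ennreal (exp (-lam) * ((lam * exp 3) ^ x / fact x)) \<partial>count_space UNIV)"
    using lam apply (simp add: nn_integral_measure_pmf ennreal_mult'[symmetric])
    apply (rule nn_integral_cong)
    subgoal for x using t[of x] by (simp add: field_simps)
    done
  also have "\<dots> = (\<Sum>x. ennreal (exp (-lam) * ((lam * exp 3) ^ x / fact x)))"
    by (simp add: nn_integral_count_space_nat)
  also have "\<dots> = ennreal (\<Sum>x. exp (-lam) * ((lam * exp 3) ^ x / fact x))"
    using sm lam by (intro suminf_ennreal2) (auto simp: sums_iff)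
  also have "(\<Sum>x. exp (-lam) * ((lam * exp 3) ^ x / fact x)) = exp (-lam) * exp (lam * exp 3)"
    using sm by (simp add: sums_iff)
  also have "\<dots> = exp (lam * (exp 3 - 1))" by (simp add: exp_diff exp_minus field_simps)
  finally show ?thesis .
qed

lemma animal_tail:
  assumes P: "prob_space M" and lam: "lam > 0"
    and ind: "prob_space.indep_vars M (\<lambda>_. count_space UNIV) X UNIV"
    and dist: "\<forall>j. distr M (count_space UNIV) (X j) = measure_pmf (poisson_pmf lam)"
    and fin: "finite A"
  shows "emeasure M {\<omega> \<in> space M. (\<Sum>k\<in>A. real (X k \<omega>)) \<ge> a}
          \<le> ennreal (exp (-3 * a)) * ennreal (exp (lam * (exp 3 - 1)) ^ card A)"
proof -
  interpret prob_space M by (rule P)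
  have mX[measurable]: "X k \<in> measurable M (count_space UNIV)" for k
    using ind unfolding indep_vars_def by auto
  have mS: "(\<lambda>\<omega>. (\<Sum>k\<in>A. real (X k \<omega>))) \<in> borel_measurable M" by measurable
  have "emeasure M {\<omega> \<in> space M. (\<Sum>k\<in>A. real (X k \<omega>)) \<ge> a}
      \<le> ennreal (exp (-3 * a)) * nn_integral M (\<lambda>\<omega>. ennreal (exp (3 * (\<Sum>k\<in>A. real (X k \<omega>)))) * indicator (space M) \<omega>)"
    by (rule Chernoff_ineq_nn_integral_ge) (use mS in auto)
  also have "nn_integral M (\<lambda>\<omega>. ennreal (exp (3 * (\<Sum>k\<in>A. real (X k \<omega>)))) * indicator (space M) \<omega>)
      = (\<integral>\<^sup>+\<omega>. (\<Prod>k\<in>A. ennreal (exp (3 * real (X k \<omega>)))) \<partial>M)"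
    by (intro nn_integral_cong) (simp add: sum_distrib_left exp_sum[OF fin] prod_ennreal)
  also have "\<dots> = (\<Prod>k\<in>A. \<integral>\<^sup>+\<omega>. ennreal (exp (3 * real (X k \<omega>))) \<partial>M)"
  proof (rule indep_vars_nn_integral[OF fin])
    show "indep_vars (\<lambda>_. borel) (\<lambda>k \<omega>. ennreal (exp (3 * real (X k \<omega>)))) A"
      by (rule indep_vars_compose2[OF indep_vars_subset[OF ind]]) auto
  qed auto
  also have "\<dots> = (\<Prod>k\<in>A. ennreal (exp (lam * (exp 3 - 1))))"
  proof (intro prod.cong refl)
    fix k
    have "(\<integral>\<^sup>+\<omega>. ennreal (exp (3 * real (X k \<omega>))) \<partial>M)
        = (\<integral>\<^sup>+x. ennreal (exp (3 * real x)) \<partial>distr M (count_space UNIV) (X k))"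
      by (subst nn_integral_distr) auto
    also have "\<dots> = ennreal (exp (lam * (exp 3 - 1)))"
      using dist poisson_mgf3[OF lam] by simp
    finally show "(\<integral>\<^sup>+\<omega>. ennreal (exp (3 * real (X k \<omega>))) \<partial>M) = ennreal (exp (lam * (exp 3 - 1)))" .
  qed
  also have "\<dots> = ennreal (exp (lam * (exp 3 - 1)) ^ card A)"
    by (simp add: ennreal_power)
  finally show ?thesis .
qed


lemma numeric:
  fixes lam y :: real and n :: nat
  assumes "lam > 0" "y \<ge> exp 3 * lam" "y \<ge> 4"
  shows "real (16 ^ n) * (exp (-3 * (y * real n)) * exp (lam * (exp 3 - 1)) ^ n) \<le> exp (- y * real n)"
proof -
  have "(16::real) = 2 ^ 4" by simp
  also have "\<dots> \<le> exp 1 ^ 4" using exp_ge_add_one_self[of 1] by (intro power_mono) auto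
  also have "\<dots> = exp 4" by (simp add: exp_of_nat_mult[symmetric])
  finally have "(16::real) ^ n \<le> exp 4 ^ n" by (intro power_mono) auto
  also have "\<dots> = exp (real n * 4)" by (simp add: exp_of_nat_mult)
  finally have a: "real (16 ^ n) \<le> exp (real n * 4)" by simp
  have b: "exp (lam * (exp 3 - 1)) ^ n = exp (real n * (lam * (exp 3 - 1)))" by (simp add: exp_of_nat_mult)
  have e: "lam * (exp 3 - 1) = exp 3 * lam - lam" by (simp add: algebra_simps)
  have c: "real n * (lam * (exp 3 - 1)) \<le> real n * y"
    using assms e by (intro mult_left_mono) auto
  have d: "real n * 4 \<le> real n * y" using assms by (intro mult_left_mono) auto
  have "real (16 ^ n) * (exp (-3 * (y * real n)) * exp (lam * (exp 3 - 1)) ^ n)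
      \<le> exp (real n * 4) * (exp (-3 * (y * real n)) * exp (real n * (lam * (exp 3 - 1))))"
    unfolding b using a by (intro mult_right_mono) auto
  also have "\<dots> = exp (real n * 4 + -3 * (y * real n) + real n * (lam * (exp 3 - 1)))"
    by (simp only: exp_add)
  also have "\<dots> \<le> exp (- y * real n)" using c d by (simp add: algebra_simps)
  finally show ?thesis .
qed

theorem lemma3p1:
  shows "\<exists>\<rho>::real. \<rho> > 0 \<and>
    (\<forall>(lam::real) (M::'a measure) (X :: int \<times> int \<Rightarrow> 'a \<Rightarrow> nat).
       lam > 0 \<longrightarrow> prob_space M \<longrightarrow>
       prob_space.indep_vars M (\<lambda>_. count_space UNIV) X UNIV \<longrightarrow>
       (\<forall>j. distr M (count_space UNIV) (X j) = measure_pmf (poisson_pmf lam)) \<longrightarrow>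
       (\<forall>y n. y \<ge> max (exp 3 * lam) \<rho> \<longrightarrow> n \<ge> 1 \<longrightarrow>
          {\<omega> \<in> space M. greedy_animal (\<lambda>k. real (X k \<omega>)) n > y * real n} \<in> sets M \<and>
          measure M {\<omega> \<in> space M. greedy_animal (\<lambda>k. real (X k \<omega>)) n > y * real n}
            \<le> exp (- y * real n)))"
proof (intro exI[of _ 4] conjI allI impI)
  fix lam :: real and M :: "'a measure" and X :: "int \<times> int \<Rightarrow> 'a \<Rightarrow> nat" and y :: real and n :: nat
  assume lam: "lam > 0" and P: "prob_space M"
    and ind: "prob_space.indep_vars M (\<lambda>_. count_space UNIV) X UNIV"
    and dist: "\<forall>j. distr M (count_space UNIV) (X j) = measure_pmf (poisson_pmf lam)"
    and y: "max (exp 3 * lam) 4 \<le> y" and n: "1 \<le> n"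
  interpret prob_space M by (rule P)
  have mX[measurable]: "X k \<in> measurable M (count_space UNIV)" for k
    using ind unfolding indep_vars_def by (cases k) auto
  define F where "F = lattice_animals n"
  have Ff: "finite F" and Fc: "card F \<le> 16 ^ n" using animals_finite_card[OF n] by (auto simp: F_def)
  have Fne: "F \<noteq> {}" using animals_nonempty[OF n] by (simp add: F_def)
  define E where "E A = {\<omega> \<in> space M. (\<Sum>k\<in>A. real (X k \<omega>)) > y * real n}" for A
  have Es: "E A \<in> sets M" for A unfolding E_def by measurable
  have eq: "{\<omega> \<in> space M. greedy_animal (\<lambda>k. real (X k \<omega>)) n > y * real n} = (\<Union>A\<in>F. E A)"
    unfolding greedy_animal_def F_def[symmetric] E_def using Ff Fne
    by (auto simp: Max_gr_iff)
  show "{\<omega> \<in> space M. greedy_animal (\<lambda>k. real (X k \<omega>)) n > y * real n} \<in> sets M"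
    unfolding eq using Ff Es by auto
  have bnd: "measure M (E A) \<le> exp (-3 * (y * real n)) * exp (lam * (exp 3 - 1)) ^ n" if "A \<in> F" for A
  proof -
    have A: "finite A" "card A = n" using that by (auto simp: F_def lattice_animals_def)
    have "emeasure M (E A) \<le> emeasure M {\<omega> \<in> space M. (\<Sum>k\<in>A. real (X k \<omega>)) \<ge> y * real n}"
      unfolding E_def by (intro emeasure_mono) (auto, measurable)
    also have "\<dots> \<le> ennreal (exp (-3 * (y * real n))) * ennreal (exp (lam * (exp 3 - 1)) ^ card A)"
      by (rule animal_tail[OF P lam ind dist A(1)])
    also have "\<dots> = ennreal (exp (-3 * (y * real n)) * exp (lam * (exp 3 - 1)) ^ n)"
      using A by (simp add: ennreal_mult')
    finally show ?thesis by (simp add: emeasure_eq_measure)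
  qed
  have "measure M (\<Union>A\<in>F. E A) \<le> (\<Sum>A\<in>F. measure M (E A))"
    using Ff Es by (intro finite_measure_subadditive_finite) auto
  also have "\<dots> \<le> (\<Sum>A\<in>F. exp (-3 * (y * real n)) * exp (lam * (exp 3 - 1)) ^ n)"
    using bnd by (intro sum_mono) auto
  also have "\<dots> = real (card F) * (exp (-3 * (y * real n)) * exp (lam * (exp 3 - 1)) ^ n)" by simp
  also have "\<dots> \<le> real (16 ^ n) * (exp (-3 * (y * real n)) * exp (lam * (exp 3 - 1)) ^ n)"
    using Fc by (intro mult_right_mono) (auto simp del: of_nat_power)
  also have "\<dots> \<le> exp (- y * real n)" using y lam by (intro numeric) auto
  finally show "measure M {\<omega> \<in> space M. greedy_animal (\<lambda>k. real (X k \<omega>)) n > y * real n} \<le> exp (- y * real n)"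
    unfolding eq .
qed (simp)

end
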